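(* Let $U\subset\mathbb{C}$ be simply connected and let $F,G$ be holomorphic and nowhere zero on $U$. Then $\mathbf{x}(z)=\mathrm{Re}\int_{z_0}^z(F,-\mathrm{i}F,-F/G)\,\mathrm{d}w$ is an admissible, conformal ($g_{ij}=|F|^2\delta_{ij}$), simply isotropic minimal immersion. Its parabolic normal is $$\xi=\Big(\mathrm{Re}\frac{G}{|G|^2},\ \mathrm{Im}\frac{G}{|G|^2},\ \frac12-\frac{1}{2|G|^2}\Big)\in\Sigma^2,$$ and $\pi(\xi)=G$.
   Context: $\mathbb{I}^3$ is $\mathbb{R}^3$ with the degenerate metric $\langle a,b\rangle=a^1b^1+a^2b^2$. A surface is admissible if none of its tangent planes contains $(0,0,1)$, and minimal if its isotropic mean curvature vanishes. The minimal normal $\mathbf{N}_m$ is the unique vector of the form $(a,b,1)$ Euclidean-orthogonal to the tangent plane. Writing $\tilde{\mathbf{N}}_m=(a,b,0)$ for its top view, the parabolic normal is $\xi=\tilde{\mathbf{N}}_m+\frac12(1-a^2-b^2)(0,0,1)$. It takes values in $\Sigma^2=\{z=\frac12-\frac12(x^2+y^2)\}$. The parabolic stereographic projection is $\pi(p_1,p_2,p_3)=\frac{1}{p_1^2+p_2^2}(p_1,p_2)\equiv\frac{p_1+\mathrm{i}p_2}{p_1^2+p_2^2}\in\mathbb{C}$, defined on $\Sigma^2\setminus\{(0,0,\frac12)\}$. *)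

theory Defs
  imports "HOL-Complex_Analysis.Complex_Analysis"
begin

text \<open>Surfaces in the simply isotropic space I^3 = R^3 with degenerate metric
  a1 b1 + a2 b2, parametrized by z = u + i v in an open subset of the complex plane.\<close>

definition iso_inner :: "real^3 \<Rightarrow> real^3 \<Rightarrow> real" where
  "iso_inner a b = a$1 * b$1 + a$2 * b$2"

definition e3 :: "real^3" where
  "e3 = vector [0, 0, 1]"

definition du :: "(complex \<Rightarrow> real^3) \<Rightarrow> complex \<Rightarrow> real^3" where
  "du x z = vector_derivative (\<lambda>t::real. x (z + of_real t)) (at 0)"

definition dv :: "(complex \<Rightarrow> real^3) \<Rightarrow> complex \<Rightarrow> real^3" where
  "dv x z = vector_derivative (\<lambda>t::real. x (z + \<i> * of_real t)) (at 0)"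

definition immersion :: "complex set \<Rightarrow> (complex \<Rightarrow> real^3) \<Rightarrow> bool" where
  "immersion U x \<longleftrightarrow> (\<forall>z\<in>U. x differentiable (at z) \<and> du x differentiable (at z) \<and>
      dv x differentiable (at z) \<and>
      (\<forall>a b::real. a *\<^sub>R du x z + b *\<^sub>R dv x z = 0 \<longrightarrow> a = 0 \<and> b = 0))"

definition admissible :: "complex set \<Rightarrow> (complex \<Rightarrow> real^3) \<Rightarrow> bool" where
  "admissible U x \<longleftrightarrow> (\<forall>z\<in>U. e3 \<notin> span {du x z, dv x z})"

definition minimal_normal :: "(complex \<Rightarrow> real^3) \<Rightarrow> complex \<Rightarrow> real^3" where
  "minimal_normal x z = (THE n. n$3 = 1 \<and> n \<bullet> du x z = 0 \<and> n \<bullet> dv x z = 0)"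

definition iso_mean_curvature :: "(complex \<Rightarrow> real^3) \<Rightarrow> complex \<Rightarrow> real" where
  "iso_mean_curvature x z =
    (let E = iso_inner (du x z) (du x z); F = iso_inner (du x z) (dv x z);
         G = iso_inner (dv x z) (dv x z); Nm = minimal_normal x z;
         L = du (du x) z \<bullet> Nm; M = dv (du x) z \<bullet> Nm; N = dv (dv x) z \<bullet> Nm
     in (E * N - 2 * F * M + G * L) / (2 * (E * G - F\<^sup>2)))"

definition iso_minimal :: "complex set \<Rightarrow> (complex \<Rightarrow> real^3) \<Rightarrow> bool" where
  "iso_minimal U x \<longleftrightarrow> (\<forall>z\<in>U. iso_mean_curvature x z = 0)"

definition parabolic_normal :: "(complex \<Rightarrow> real^3) \<Rightarrow> complex \<Rightarrow> real^3" where
  "parabolic_normal x z =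
    (let n = minimal_normal x z in vector [n$1, n$2, (1 - (n$1)\<^sup>2 - (n$2)\<^sup>2) / 2])"

definition Sigma2 :: "(real^3) set" where
  "Sigma2 = {p. p$3 = 1/2 - ((p$1)\<^sup>2 + (p$2)\<^sup>2) / 2}"

text \<open>Parabolic stereographic projection, defined on Sigma2 minus (0,0,1/2).\<close>
definition par_stereo :: "real^3 \<Rightarrow> complex" where
  "par_stereo p = Complex (p$1) (p$2) / complex_of_real ((p$1)\<^sup>2 + (p$2)\<^sup>2)"

text \<open>The integral from z0 to z of f along any valid path in U
  (path-independent for holomorphic f on simply connected U).\<close>
definition path_int :: "complex set \<Rightarrow> complex \<Rightarrow> (complex \<Rightarrow> complex) \<Rightarrow> complex \<Rightarrow> complex" where
  "path_int U z0 f z = (THE I. \<forall>\<gamma>. valid_path \<gamma> \<and> path_image \<gamma> \<subseteq> U \<and>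
      pathstart \<gamma> = z0 \<and> pathfinish \<gamma> = z \<longrightarrow> (f has_contour_integral I) \<gamma>)"

end

theory Submission
  imports Defs
begin

lemma vec3_eq: "(vector [a,b,c] :: real^3) = a *\<^sub>R axis 1 1 + b *\<^sub>R axis 2 1 + c *\<^sub>R axis 3 1"
  by (simp add: vec_eq_iff forall_3 axis_def)

lemma re_vd:
  assumes "(h has_field_derivative d) (at (z + of_real 0))" and "k \<noteq> (0::complex)"
  shows "((\<lambda>t::real. Re (h (z + k * of_real t))) has_real_derivative Re (k * d)) (at 0)"
proof -
  have p: "((\<lambda>t::real. z + k * of_real t) has_vector_derivative k) (at 0)"
    by (auto intro!: derivative_eq_intros)
  have "((h \<circ> (\<lambda>t::real. z + k * of_real t)) has_vector_derivative (k * d)) (at 0)"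
    by (rule field_vector_diff_chain_at[OF p]) (use assms in simp)
  from bounded_linear.has_vector_derivative[OF bounded_linear_Re this]
  show ?thesis by (simp add: has_real_derivative_iff_has_vector_derivative o_def)
qed

lemma sc: "(f has_real_derivative f') F \<Longrightarrow> ((\<lambda>t. f t *\<^sub>R (c::real^3)) has_vector_derivative f' *\<^sub>R c) F"
  using bounded_linear.has_vector_derivative[OF bounded_linear_scaleR_left, of f f' F c]
  by (simp add: has_real_derivative_iff_has_vector_derivative)

lemma lemA:
  assumes U: "open U" "z \<in> U" and y: "\<forall>w\<in>U. y w = vector [Re (h1 w), Re (h2 w), Re (h3 w)]"
    and d1: "(h1 has_field_derivative d1) (at z)"
    and d2: "(h2 has_field_derivative d2) (at z)"
    and d3: "(h3 has_field_derivative d3) (at z)"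
  shows "y differentiable (at z)"
    "du y z = vector [Re d1, Re d2, Re d3]"
    "dv y z = vector [Re (\<i> * d1), Re (\<i> * d2), Re (\<i> * d3)]"
proof -
  define Y :: "complex \<Rightarrow> real^3" where "Y w = vector [Re (h1 w), Re (h2 w), Re (h3 w)]" for w
  have Ye: "Y w = Re (h1 w) *\<^sub>R axis 1 1 + Re (h2 w) *\<^sub>R axis 2 1 + Re (h3 w) *\<^sub>R axis 3 1" for w
    unfolding Y_def vec3_eq ..
  have hd: "((\<lambda>w. Re (h w)) has_derivative (\<lambda>v. Re (d * v))) (at z)"
    if "(h has_field_derivative d) (at z)" for h d
    using bounded_linear.has_derivative[OF bounded_linear_Re that[unfolded has_field_derivative_def]]
    by (simp add: mult.commute)
  have "Y differentiable (at z)"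
    unfolding differentiable_def Ye
    using has_derivative_add[OF has_derivative_add[OF has_derivative_scaleR_left[OF hd[OF d1]]
       has_derivative_scaleR_left[OF hd[OF d2]]] has_derivative_scaleR_left[OF hd[OF d3]]]
    by blast
  then show "y differentiable (at z)"
    unfolding differentiable_def
    using has_derivative_transform_within_open[OF _ U(1) U(2)] y by (metis Y_def)
  have gen: "vector_derivative (\<lambda>t::real. y (z + k * of_real t)) (at 0) = 
      vector [Re (k * d1), Re (k * d2), Re (k * d3)]" if "k \<noteq> 0" for k
  proof -
    have "((\<lambda>t::real. Y (z + k * of_real t)) has_vector_derivative 
       (Re (k * d1) *\<^sub>R axis 1 1 + Re (k * d2) *\<^sub>R axis 2 1 + Re (k * d3) *\<^sub>R axis 3 1)) (at 0)"
      unfolding Ye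
      using has_vector_derivative_add[OF has_vector_derivative_add[OF
         sc[OF re_vd[OF _ that]] sc[OF re_vd[OF _ that]]] sc[OF re_vd[OF _ that]]] d1 d2 d3
      by simp
    then have *: "((\<lambda>t::real. Y (z + k * of_real t)) has_vector_derivative 
       vector [Re (k * d1), Re (k * d2), Re (k * d3)]) (at 0)" by (simp add: vec3_eq)
    have "open ((\<lambda>t::real. z + k * of_real t) -` U)"
      by (intro open_vimage U(1) continuous_intros)
    then have o: "open {t::real. z + k * of_real t \<in> U}" by (simp add: vimage_def)
    have "((\<lambda>t::real. y (z + k * of_real t)) has_vector_derivative 
       vector [Re (k * d1), Re (k * d2), Re (k * d3)]) (at 0)"
      by (rule has_vector_derivative_transform_within_open[OF * o]) (use U y Y_def in auto)
    then show ?thesis by (rule vector_derivative_at)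
  qed
  show "du y z = vector [Re d1, Re d2, Re d3]"
    using gen[of 1] unfolding du_def by simp
  show "dv y z = vector [Re (\<i> * d1), Re (\<i> * d2), Re (\<i> * d3)]"
    using gen[of \<i>] unfolding dv_def by simp
qed
lemma path_int_prim:
  assumes U: "open U" "simply_connected U" "z0 \<in> U" and f: "f holomorphic_on U"
  shows "\<exists>P. (\<forall>z\<in>U. (P has_field_derivative f z) (at z)) \<and> (\<forall>z\<in>U. path_int U z0 f z = P z - P z0)"
proof -
  have cU: "connected U" using U simply_connected_eq_global_primitive by blast
  obtain h where h: "\<And>z. z \<in> U \<Longrightarrow> (h has_field_derivative f z) (at z)"
    using U f simply_connected_eq_global_primitive by metis
  have "path_int U z0 f z = h z - h z0" if z: "z \<in> U" for z
    unfolding path_int_def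
  proof (rule the_equality)
    show "\<forall>\<gamma>. valid_path \<gamma> \<and> path_image \<gamma> \<subseteq> U \<and> pathstart \<gamma> = z0 \<and> pathfinish \<gamma> = z \<longrightarrow>
          (f has_contour_integral h z - h z0) \<gamma>"
      using contour_integral_primitive[of U h f] h by (metis has_field_derivative_at_within)
  next
    fix I assume I: "\<forall>\<gamma>. valid_path \<gamma> \<and> path_image \<gamma> \<subseteq> U \<and> pathstart \<gamma> = z0 \<and> pathfinish \<gamma> = z \<longrightarrow>
          (f has_contour_integral I) \<gamma>"
    obtain g where g: "polynomial_function g" "path_image g \<subseteq> U" "pathstart g = z0" "pathfinish g = z"
      using connected_open_polynomial_connected[OF U(1) cU U(3) z] by blast
    have vg: "valid_path g" using g(1) valid_path_polynomial_function by blast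
    have "(f has_contour_integral I) g" using I g vg by blast
    moreover have "(f has_contour_integral h z - h z0) g"
      using contour_integral_primitive[of U h f g] h vg g by (metis has_field_derivative_at_within)
    ultimately show "I = h z - h z0" by (rule has_contour_integral_unique)
  qed
  then show ?thesis using h by blast
qed

lemma inner3: "(n::real^3) \<bullet> v = n$1 * v$1 + n$2 * v$2 + n$3 * v$3"
  by (simp add: inner_vec_def sum_3)

lemma indep:
  assumes "(c::complex) \<noteq> 0" "a * Re c - b * Im c = 0" "a * Im c + b * Re c = 0"
  shows "a = 0 \<and> b = 0"
proof -
  have "a * ((Re c)\<^sup>2 + (Im c)\<^sup>2) = 0" "b * ((Re c)\<^sup>2 + (Im c)\<^sup>2) = 0"
    using assms(2,3) by algebra+
  moreover have "(Re c)\<^sup>2 + (Im c)\<^sup>2 \<noteq> 0" using assms(1)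
    by (metis complex_eq_iff zero_complex.simps sum_power2_eq_zero_iff)
  ultimately show ?thesis by auto
qed

lemma alg:
  fixes F G :: complex assumes "G \<noteq> 0"
  shows "Re (G / of_real ((cmod G)\<^sup>2)) * Re F + Im (G / of_real ((cmod G)\<^sup>2)) * Im F - Re (F / G) = 0"
    "- Re (G / of_real ((cmod G)\<^sup>2)) * Im F + Im (G / of_real ((cmod G)\<^sup>2)) * Re F + Im (F / G) = 0"
proof -
  define D where "D = (Re G)\<^sup>2 + (Im G)\<^sup>2"
  have D: "D \<noteq> 0" using assms unfolding D_def
    by (metis complex_eq_iff zero_complex.simps sum_power2_eq_zero_iff)
  have c: "(cmod G)\<^sup>2 = D" by (simp add: D_def cmod_power2)
  have r1: "Re (G / of_real ((cmod G)\<^sup>2)) = Re G / D" "Im (G / of_real ((cmod G)\<^sup>2)) = Im G / D"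
    unfolding c by (simp_all add: Re_divide_of_real Im_divide_of_real)
  have r2: "Re (F / G) = (Re F * Re G + Im F * Im G) / D" "Im (F / G) = (Im F * Re G - Re F * Im G) / D"
    by (simp_all add: Re_divide Im_divide D_def)
  show "Re (G / of_real ((cmod G)\<^sup>2)) * Re F + Im (G / of_real ((cmod G)\<^sup>2)) * Im F - Re (F / G) = 0"
    unfolding r1 r2 using D by (simp add: field_simps)
  show "- Re (G / of_real ((cmod G)\<^sup>2)) * Im F + Im (G / of_real ((cmod G)\<^sup>2)) * Re F + Im (F / G) = 0"
    unfolding r1 r2 using D by (simp add: field_simps)
qed

lemma ii: "Re (\<i> * a / b) = - Im (a / b)"
  by (metis times_divide_eq_right Re_i_times)

theorem mainTheorem8:
  fixes U :: "complex set" and F G :: "complex \<Rightarrow> complex" and z0 :: complex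
    and x :: "complex \<Rightarrow> real^3"
  assumes "open U" and "simply_connected U" and "z0 \<in> U"
    and "F holomorphic_on U" and "G holomorphic_on U"
    and "\<forall>z\<in>U. F z \<noteq> 0" and "\<forall>z\<in>U. G z \<noteq> 0"
    and x_def: "\<forall>z. x z = vector [Re (path_int U z0 F z),
                                 Re (path_int U z0 (\<lambda>w. - \<i> * F w) z),
                                 Re (path_int U z0 (\<lambda>w. - F w / G w) z)]"
  shows "immersion U x \<and> admissible U x \<and> iso_minimal U x
     \<and> (\<forall>z\<in>U. iso_inner (du x z) (du x z) = (cmod (F z))\<^sup>2
              \<and> iso_inner (dv x z) (dv x z) = (cmod (F z))\<^sup>2
              \<and> iso_inner (du x z) (dv x z) = 0)
     \<and> (\<forall>z\<in>U. parabolic_normal x z =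
              vector [Re (G z / of_real ((cmod (G z))\<^sup>2)), Im (G z / of_real ((cmod (G z))\<^sup>2)),
                      1/2 - 1 / (2 * (cmod (G z))\<^sup>2)]
            \<and> parabolic_normal x z \<in> Sigma2 - {vector [0, 0, 1/2]}
            \<and> par_stereo (parabolic_normal x z) = G z)"
proof -
  note U = assms(1,2,3)
  define f1 where "f1 = F"
  define f2 where "f2 = (\<lambda>w. - \<i> * F w)"
  define f3 where "f3 = (\<lambda>w. - F w / G w)"
  have hol: "f1 holomorphic_on U" "f2 holomorphic_on U" "f3 holomorphic_on U"
    unfolding f1_def f2_def f3_def using assms(4,5,7) by (auto intro!: holomorphic_intros)
  obtain P1 where P1: "\<forall>z\<in>U. (P1 has_field_derivative f1 z) (at z)" "\<forall>z\<in>U. path_int U z0 f1 z = P1 z - P1 z0"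
    using path_int_prim[OF U hol(1)] by blast
  obtain P2 where P2: "\<forall>z\<in>U. (P2 has_field_derivative f2 z) (at z)" "\<forall>z\<in>U. path_int U z0 f2 z = P2 z - P2 z0"
    using path_int_prim[OF U hol(2)] by blast
  obtain P3 where P3: "\<forall>z\<in>U. (P3 has_field_derivative f3 z) (at z)" "\<forall>z\<in>U. path_int U z0 f3 z = P3 z - P3 z0"
    using path_int_prim[OF U hol(3)] by blast
  have xU: "\<forall>w\<in>U. x w = vector [Re (P1 w - P1 z0), Re (P2 w - P2 z0), Re (P3 w - P3 z0)]"
    using x_def P1(2) P2(2) P3(2) unfolding f1_def f2_def f3_def by simp
  have dP: "((\<lambda>w. P w - P z0) has_field_derivative f z) (at z)"
    if "(P has_field_derivative f z) (at z)" for P f z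
    using that by (auto intro!: derivative_eq_intros)
  have A1: "x differentiable (at z) \<and> du x z = vector [Re (f1 z), Re (f2 z), Re (f3 z)] \<and>
     dv x z = vector [Re (\<i> * f1 z), Re (\<i> * f2 z), Re (\<i> * f3 z)]" if z: "z \<in> U" for z
    using lemA[OF U(1) z xU dP dP dP] P1(1) P2(1) P3(1) z by blast
  have dk: "(f has_field_derivative deriv f z) (at z)" if "f holomorphic_on U" "z \<in> U" for f z
    using holomorphic_derivI[OF that(1) U(1) that(2)] .
  have dki: "((\<lambda>w. \<i> * f w) has_field_derivative \<i> * deriv f z) (at z)" if "f holomorphic_on U" "z \<in> U" for f z
    using DERIV_cmult[OF dk[OF that]] .
  have A2: "du x differentiable (at z) \<and> du (du x) z = vector [Re (deriv f1 z), Re (deriv f2 z), Re (deriv f3 z)]"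
    if z: "z \<in> U" for z
    using lemA[OF U(1) z _ dk[OF hol(1) z] dk[OF hol(2) z] dk[OF hol(3) z], of "du x"] A1 by blast
  have A3: "dv x differentiable (at z) \<and> dv (dv x) z = vector [Re (\<i> * (\<i> * deriv f1 z)), Re (\<i> * (\<i> * deriv f2 z)), Re (\<i> * (\<i> * deriv f3 z))]"
    if z: "z \<in> U" for z
    using lemA[OF U(1) z _ dki[OF hol(1) z] dki[OF hol(2) z] dki[OF hol(3) z], of "dv x"] A1 by blast
  have sum0: "du (du x) z + dv (dv x) z = 0" if "z \<in> U" for z
    using A2[OF that] A3[OF that] by (simp add: vec_eq_iff forall_3)
  have fund: "iso_inner (du x z) (du x z) = (cmod (F z))\<^sup>2
              \<and> iso_inner (dv x z) (dv x z) = (cmod (F z))\<^sup>2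
              \<and> iso_inner (du x z) (dv x z) = 0" if "z \<in> U" for z
    using A1[OF that] cmod_power2[of "F z"] by (simp add: iso_inner_def f1_def f2_def power2_eq_square algebra_simps)
  have ind: "\<forall>a b::real. a *\<^sub>R du x z + b *\<^sub>R dv x z = 0 \<longrightarrow> a = 0 \<and> b = 0" if z: "z \<in> U" for z
  proof (intro allI impI)
    fix a b :: real assume "a *\<^sub>R du x z + b *\<^sub>R dv x z = 0"
    then have "(a *\<^sub>R du x z + b *\<^sub>R dv x z)$1 = 0" "(a *\<^sub>R du x z + b *\<^sub>R dv x z)$2 = 0" by auto
    then show "a = 0 \<and> b = 0"
      using A1[OF z] assms(6) z by (intro indep[of "F z"]) (auto simp: f1_def f2_def)
  qed
  define m where "m z = (vector [Re (G z / of_real ((cmod (G z))\<^sup>2)), Im (G z / of_real ((cmod (G z))\<^sup>2)), 1] :: real^3)" for z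
  have Nm: "minimal_normal x z = m z" if z: "z \<in> U" for z
    unfolding minimal_normal_def
  proof (rule the_equality)
    show "m z $ 3 = 1 \<and> m z \<bullet> du x z = 0 \<and> m z \<bullet> dv x z = 0"
      using A1[OF z] alg[of "G z" "F z"] assms(7) z ii
      by (simp add: m_def inner3 f1_def f2_def f3_def)
  next
    fix n assume n: "n $ 3 = 1 \<and> n \<bullet> du x z = 0 \<and> n \<bullet> dv x z = 0"
    have Gz: "G z \<noteq> 0" using assms(7) z by auto
    have c1: "n$1 * Re (F z) + n$2 * Im (F z) - Re (F z / G z) = 0"
      using A1[OF z] n by (simp add: inner3 f1_def f2_def f3_def)
    have c2: "- n$1 * Im (F z) + n$2 * Re (F z) + Im (F z / G z) = 0"
      using A1[OF z] n ii by (auto simp: inner3 f1_def f2_def f3_def)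
    have m1: "m z $1 = Re (G z / of_real ((cmod (G z))\<^sup>2))" "m z $2 = Im (G z / of_real ((cmod (G z))\<^sup>2))"
      by (simp_all add: m_def)
    note a1 = alg(1)[OF Gz, of "F z"] and a2 = alg(2)[OF Gz, of "F z"]
    have e1: "(n$2 - m z$2) * Re (F z) - (n$1 - m z$1) * Im (F z) = 0"
      unfolding m1 using c2 a2 by algebra
    have e2: "(n$2 - m z$2) * Im (F z) + (n$1 - m z$1) * Re (F z) = 0"
      unfolding m1 using c1 a1 by algebra
    note e = e1 e2
    from indep[OF _ e] assms(6) z have "n$1 = m z$1" "n$2 = m z$2" by auto
    with n show "n = m z" by (simp add: vec_eq_iff forall_3 m_def)
  qed
  have minimal: "iso_mean_curvature x z = 0" if z: "z \<in> U" for z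
  proof -
    have "dv (dv x) z \<bullet> minimal_normal x z + du (du x) z \<bullet> minimal_normal x z = 0"
      using sum0[OF z] by (metis inner_add_left add.commute inner_zero_left)
    then have "(cmod (F z))\<^sup>2 * (dv (dv x) z \<bullet> minimal_normal x z) + (cmod (F z))\<^sup>2 * (du (du x) z \<bullet> minimal_normal x z) = 0"
      by (metis distrib_left mult_zero_right)
    then show ?thesis using fund[OF z] by (simp add: iso_mean_curvature_def Let_def)
  qed
  have adm: "e3 \<notin> span {du x z, dv x z}" if z: "z \<in> U" for z
  proof
    assume "e3 \<in> span {du x z, dv x z}"
    then obtain a b where ab: "e3 = a *\<^sub>R du x z + b *\<^sub>R dv x z"
      by (auto simp: span_breakdown_eq) (metis add.commute diff_eq_eq)
    then have "a = 0 \<and> b = 0"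
      using A1[OF z] assms(6) z by (intro indep[of "F z"]) (auto simp: f1_def f2_def e3_def vec_eq_iff forall_3)
    with ab show False by (simp add: e3_def vec_eq_iff forall_3)
  qed
  have par: "parabolic_normal x z =
              vector [Re (G z / of_real ((cmod (G z))\<^sup>2)), Im (G z / of_real ((cmod (G z))\<^sup>2)),
                      1/2 - 1 / (2 * (cmod (G z))\<^sup>2)]
            \<and> parabolic_normal x z \<in> Sigma2 - {vector [0, 0, 1/2]}
            \<and> par_stereo (parabolic_normal x z) = G z" if z: "z \<in> U" for z
  proof -
    have Gz: "G z \<noteq> 0" using assms(7) z by auto
    define g1 where "g1 = Re (G z)"
    define g2 where "g2 = Im (G z)"
    define D where "D = g1\<^sup>2 + g2\<^sup>2"
    have D: "D \<noteq> 0" using Gz unfolding D_def g1_def g2_def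
      by (metis complex_eq_iff zero_complex.simps sum_power2_eq_zero_iff)
    have c: "(cmod (G z))\<^sup>2 = D" by (simp add: D_def g1_def g2_def cmod_power2)
    have r1: "Re (G z / of_real D) = g1 / D" "Im (G z / of_real D) = g2 / D"
      by (simp_all add: Re_divide_of_real Im_divide_of_real g1_def g2_def)
    have sq: "(g1 / D)\<^sup>2 + (g2 / D)\<^sup>2 = 1 / D"
    proof -
      have "(g1 / D)\<^sup>2 + (g2 / D)\<^sup>2 = (g1\<^sup>2 + g2\<^sup>2) / D\<^sup>2"
        by (simp only: power_divide add_divide_distrib)
      also have "\<dots> = D / D\<^sup>2" by (simp only: D_def)
      also have "\<dots> = 1 / D" using D by (simp add: power2_eq_square)
      finally show ?thesis .
    qed
    have t3: "(1 - (g1 / D)\<^sup>2 - (g2 / D)\<^sup>2) / 2 = 1/2 - 1 / (2 * D)"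
    proof -
      have "1 - (g1 / D)\<^sup>2 - (g2 / D)\<^sup>2 = 1 - 1 / D" using sq by linarith
      then show ?thesis by (simp add: diff_divide_distrib)
    qed
    have pn: "parabolic_normal x z = vector [g1 / D, g2 / D, (1 - (g1 / D)\<^sup>2 - (g2 / D)\<^sup>2) / 2]"
      unfolding parabolic_normal_def Nm[OF z] m_def c r1 Let_def vector_3 ..
    show ?thesis
    proof (intro conjI)
      show "parabolic_normal x z =
              vector [Re (G z / of_real ((cmod (G z))\<^sup>2)), Im (G z / of_real ((cmod (G z))\<^sup>2)),
                      1/2 - 1 / (2 * (cmod (G z))\<^sup>2)]"
        unfolding pn c r1 t3 ..
      have ne: "\<not> (g1 / D = 0 \<and> g2 / D = 0)"
      proof
        assume "g1 / D = 0 \<and> g2 / D = 0"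
        then have "(g1 / D)\<^sup>2 + (g2 / D)\<^sup>2 = 0" by simp
        with sq D show False by simp
      qed
      show "parabolic_normal x z \<in> Sigma2 - {vector [0, 0, 1/2]}"
      proof
        show "parabolic_normal x z \<in> Sigma2"
          unfolding pn Sigma2_def by (simp add: field_simps)
        show "parabolic_normal x z \<notin> {vector [0, 0, 1/2]}"
        proof
          assume "parabolic_normal x z \<in> {vector [0, 0, 1/2]}"
          then have "parabolic_normal x z $ 1 = 0" "parabolic_normal x z $ 2 = 0" by auto
          with ne show False unfolding pn by auto
        qed
      qed
      have cx: "Complex (g1 / D) (g2 / D) = G z / of_real D"
        by (simp add: complex_eq_iff r1 g1_def g2_def)
      have "G z / of_real D / of_real (1 / D) = G z"
        using D by simp
      then show "par_stereo (parabolic_normal x z) = G z"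
        unfolding pn par_stereo_def vector_3 sq cx .
    qed
  qed
  show ?thesis
    unfolding immersion_def admissible_def iso_minimal_def
    using A1 A2 A3 ind adm minimal fund par by blast
qed
end
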